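(* Let $H$ be a Hilbert space, $\ell\ge1$, and $\mathbf{b}=[b_1,\dots,b_\ell]^t$ with $b_j\in\mathcal{B}(H)$. Then $b_1,\dots,b_\ell$ are linearly independent if and only if there exist vectors $\xi_1,\dots,\xi_m\in H$ such that $\sum_{k=1}^mQ(\mathbf{b},\xi_k)$ is positive definite.
   Context: For $\xi\in H$, $Q(\mathbf{b},\xi)=(\langle b_i^*b_j\xi,\xi\rangle)_{i,j=1}^\ell=(\langle b_j\xi,b_i\xi\rangle)_{i,j=1}^\ell\in M_\ell(\mathbb{C})$. *)

theory Defs
  imports "HOL-Analysis.Analysis"
begin

class complex_vector = real_vector +
  fixes scaleC :: "complex \<Rightarrow> 'a \<Rightarrow> 'a" (infixr "*\<^sub>C" 75)
  assumes scaleC_add_right: "a *\<^sub>C (x + y) = a *\<^sub>C x + a *\<^sub>C y"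
    and scaleC_add_left: "(a + b) *\<^sub>C x = a *\<^sub>C x + b *\<^sub>C x"
    and scaleC_scaleC: "a *\<^sub>C (b *\<^sub>C x) = (a * b) *\<^sub>C x"
    and scaleC_one: "1 *\<^sub>C x = x"
    and scaleR_scaleC: "scaleR r x = complex_of_real r *\<^sub>C x"

class chilbert = complex_vector + banach +
  fixes cinner :: "'a \<Rightarrow> 'a \<Rightarrow> complex"
  assumes cinner_add_left: "cinner (x + y) z = cinner x z + cinner y z"
    and cinner_scaleC_left: "cinner (a *\<^sub>C x) y = a * cinner x y"
    and cinner_commute: "cinner y x = cnj (cinner x y)"
    and cinner_nonneg: "0 \<le> Re (cinner x x)"
    and cinner_eq_zero_iff: "cinner x x = 0 \<longleftrightarrow> x = 0"
    and norm_eq_sqrt_cinner: "norm x = sqrt (Re (cinner x x))"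

definition bounded_clinear :: "('a::chilbert \<Rightarrow> 'b::chilbert) \<Rightarrow> bool" where
  "bounded_clinear f \<longleftrightarrow>
     (\<forall>x y. f (x + y) = f x + f y) \<and> (\<forall>a x. f (a *\<^sub>C x) = a *\<^sub>C f x) \<and>
     (\<exists>K. \<forall>x. norm (f x) \<le> K * norm x)"

definition ops_lin_indep :: "nat \<Rightarrow> (nat \<Rightarrow> 'a::chilbert \<Rightarrow> 'a) \<Rightarrow> bool" where
  "ops_lin_indep l b \<longleftrightarrow>
     (\<forall>c :: nat \<Rightarrow> complex. (\<forall>x. (\<Sum>j<l. c j *\<^sub>C b j x) = 0) \<longrightarrow> (\<forall>j<l. c j = 0))"

text \<open>Q(b, xi) as an l x l matrix with indices 0..l-1: entry (i,j) is <b_j xi, b_i xi>.\<close>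
definition Qmat :: "(nat \<Rightarrow> 'a::chilbert \<Rightarrow> 'a) \<Rightarrow> 'a \<Rightarrow> nat \<Rightarrow> nat \<Rightarrow> complex" where
  "Qmat b xi i j = cinner (b j xi) (b i xi)"

definition pos_def_mat :: "nat \<Rightarrow> (nat \<Rightarrow> nat \<Rightarrow> complex) \<Rightarrow> bool" where
  "pos_def_mat l A \<longleftrightarrow>
     (\<forall>v :: nat \<Rightarrow> complex. (\<exists>i<l. v i \<noteq> 0) \<longrightarrow>
        (let s = (\<Sum>i<l. \<Sum>j<l. cnj (v i) * A i j * v j) in Im s = 0 \<and> Re s > 0))"

end

theory Submission
  imports Defs
begin

lemma scaleC_zero_left[simp]: "(0::complex) *\<^sub>C (x::'a::complex_vector) = 0"
proof -
  have "(0::complex) *\<^sub>C x = (0 + 0) *\<^sub>C x" by simp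
  also have "\<dots> = 0 *\<^sub>C x + 0 *\<^sub>C x" by (rule scaleC_add_left)
  finally show ?thesis by simp
qed

lemma scaleC_zero_right[simp]: "(a::complex) *\<^sub>C (0::'a::complex_vector) = 0"
proof -
  have "a *\<^sub>C (0::'a) = a *\<^sub>C (0 + 0)" by simp
  also have "\<dots> = a *\<^sub>C 0 + a *\<^sub>C 0" by (rule scaleC_add_right)
  finally show ?thesis by simp
qed

lemma scaleC_diff_left: "((a::complex) - b) *\<^sub>C (x::'a::complex_vector) = a *\<^sub>C x - b *\<^sub>C x"
proof -
  have "a *\<^sub>C x = ((a - b) + b) *\<^sub>C x" by simp
  also have "\<dots> = (a - b) *\<^sub>C x + b *\<^sub>C x" by (rule scaleC_add_left)
  finally show ?thesis by (simp add: algebra_simps)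
qed

lemma scaleC_sum_right: "(a::complex) *\<^sub>C (\<Sum>j\<in>A. f j) = (\<Sum>j\<in>A. a *\<^sub>C (f j::'a::complex_vector))"
  by (induct A rule: infinite_finite_induct) (auto simp: scaleC_add_right)

lemma scaleC_eq_0: "(a::complex) *\<^sub>C (x::'a::complex_vector) = 0 \<Longrightarrow> x \<noteq> 0 \<Longrightarrow> a = 0"
proof (rule ccontr)
  assume h: "a *\<^sub>C x = 0" "x \<noteq> 0" "a \<noteq> 0"
  have "x = (inverse a * a) *\<^sub>C x" using h(3) by (simp add: scaleC_one)
  also have "\<dots> = inverse a *\<^sub>C (a *\<^sub>C x)" by (simp add: scaleC_scaleC)
  also have "\<dots> = 0" using h(1) by simp
  finally show False using h(2) by simp
qed

lemma cinner_zero_left[simp]: "cinner 0 (z::'a::chilbert) = 0"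
proof -
  have "cinner (0::'a) z = cinner (0 + 0) z" by simp
  also have "\<dots> = cinner 0 z + cinner 0 z" by (rule cinner_add_left)
  finally show ?thesis by simp
qed

lemma cinner_sum_left: "cinner (\<Sum>j\<in>A. f j) (z::'a::chilbert) = (\<Sum>j\<in>A. cinner (f j) z)"
  by (induct A rule: infinite_finite_induct) (auto simp: cinner_add_left)

lemma cinner_sum_right: "cinner (z::'a::chilbert) (\<Sum>j\<in>A. f j) = (\<Sum>j\<in>A. cinner z (f j))"
  by (subst cinner_commute) (simp add: cinner_sum_left flip: cinner_commute)

lemma cinner_scaleC_right: "cinner (z::'a::chilbert) (a *\<^sub>C x) = cnj a * cinner z x"
  by (subst cinner_commute) (simp add: cinner_scaleC_left flip: cinner_commute)

lemma sum_scaleC_diff: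
  "(\<Sum>j\<in>A. (v j - t * u j) *\<^sub>C (y j::'a::complex_vector))
     = (\<Sum>j\<in>A. v j *\<^sub>C y j) - t *\<^sub>C (\<Sum>j\<in>A. u j *\<^sub>C y j)"
  by (simp add: scaleC_diff_left sum_subtractf scaleC_sum_right scaleC_scaleC)

definition kern_triv :: "nat \<Rightarrow> (nat \<Rightarrow> 'a::chilbert \<Rightarrow> 'a) \<Rightarrow> nat \<Rightarrow> (nat \<Rightarrow> 'a) \<Rightarrow> bool" where
  "kern_triv l b m xi \<longleftrightarrow> (\<forall>v. (\<forall>k<m. (\<Sum>j<l. v j *\<^sub>C b j (xi k)) = 0) \<longrightarrow> (\<forall>j<l. v j = 0))"

lemma indep_Suc: "ops_lin_indep (Suc l) b \<Longrightarrow> ops_lin_indep l b"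
  unfolding ops_lin_indep_def
proof (intro allI impI)
  fix c :: "nat \<Rightarrow> complex" and j
  assume H: "\<forall>c. (\<forall>x. (\<Sum>j<Suc l. c j *\<^sub>C b j x) = 0) \<longrightarrow> (\<forall>j<Suc l. c j = 0)"
    and c: "\<forall>x. (\<Sum>j<l. c j *\<^sub>C b j x) = 0" and j: "j < l"
  let ?c = "c(l := 0)"
  have "\<forall>x. (\<Sum>j<Suc l. ?c j *\<^sub>C b j x) = 0"
    using c by simp
  then have "\<forall>j<Suc l. ?c j = 0" using H by blast
  then show "c j = 0" using j by (metis less_Suc_eq less_irrefl fun_upd_other)
qed

lemma exists_kern: "ops_lin_indep l b \<Longrightarrow> \<exists>m xi. kern_triv l b m xi"
proof (induct l)
  case 0
  then show ?case by (auto simp: kern_triv_def)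
next
  case (Suc l)
  from Suc.hyps[OF indep_Suc[OF Suc.prems]] obtain m xi where K: "kern_triv l b m xi" by blast
  show ?case
  proof (cases "\<forall>v. (\<forall>k<m. (\<Sum>j<Suc l. v j *\<^sub>C b j (xi k)) = 0) \<longrightarrow> v l = 0")
    case True
    have "kern_triv (Suc l) b m xi"
      unfolding kern_triv_def
    proof (intro allI impI)
      fix v j assume v: "\<forall>k<m. (\<Sum>j<Suc l. v j *\<^sub>C b j (xi k)) = 0" and j: "j < Suc l"
      have vl: "v l = 0" using True v by blast
      have "\<forall>k<m. (\<Sum>j<l. v j *\<^sub>C b j (xi k)) = 0" using v vl by simp
      then have "\<forall>j<l. v j = 0" using K unfolding kern_triv_def by blast
      then show "v j = 0" using vl j less_Suc_eq by auto
    qed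
    then show ?thesis by blast
  next
    case False
    then obtain u where u: "\<forall>k<m. (\<Sum>j<Suc l. u j *\<^sub>C b j (xi k)) = 0" and ul: "u l \<noteq> 0" by blast
    have "\<not> (\<forall>x. (\<Sum>j<Suc l. u j *\<^sub>C b j x) = 0)"
      using Suc.prems ul unfolding ops_lin_indep_def by blast
    then obtain x0 where x0: "(\<Sum>j<Suc l. u j *\<^sub>C b j x0) \<noteq> 0" by blast
    define xi' where "xi' = xi(m := x0)"
    have "kern_triv (Suc l) b (Suc m) xi'"
      unfolding kern_triv_def
    proof (intro allI impI)
      fix v j assume v: "\<forall>k<Suc m. (\<Sum>j<Suc l. v j *\<^sub>C b j (xi' k)) = 0" and j: "j < Suc l"
      define t where "t = v l / u l"
      define w where "w = (\<lambda>j. v j - t * u j)"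
      have wl: "w l = 0" using ul by (simp add: w_def t_def)
      have wS: "(\<Sum>j<Suc l. w j *\<^sub>C b j (xi k)) = 0" if k: "k < m" for k
      proof -
        have "(\<Sum>j<Suc l. w j *\<^sub>C b j (xi k)) = (\<Sum>j<Suc l. v j *\<^sub>C b j (xi k)) - t *\<^sub>C (\<Sum>j<Suc l. u j *\<^sub>C b j (xi k))"
          unfolding w_def by (rule sum_scaleC_diff)
        also have "\<dots> = 0" using v[rule_format, of k] u[rule_format, of k] k by (simp add: xi'_def)
        finally show ?thesis .
      qed
      have "\<forall>k<m. (\<Sum>j<l. w j *\<^sub>C b j (xi k)) = 0"
        using wS wl by simp
      then have w0: "\<forall>j<l. w j = 0" using K unfolding kern_triv_def by blast
      then have wall: "\<forall>j<Suc l. w j = 0" using wl less_Suc_eq by auto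
      have "(\<Sum>j<Suc l. w j *\<^sub>C b j x0) = (\<Sum>j<Suc l. v j *\<^sub>C b j x0) - t *\<^sub>C (\<Sum>j<Suc l. u j *\<^sub>C b j x0)"
        unfolding w_def by (rule sum_scaleC_diff)
      moreover have "(\<Sum>j<Suc l. w j *\<^sub>C b j x0) = 0" using wall by simp
      moreover have "(\<Sum>j<Suc l. v j *\<^sub>C b j x0) = 0" using v[rule_format, of m] by (simp add: xi'_def)
      ultimately have "t *\<^sub>C (\<Sum>j<Suc l. u j *\<^sub>C b j x0) = 0" by simp
      then have "t = 0" using x0 scaleC_eq_0 by blast
      then show "v j = 0" using wall j by (simp add: w_def)
    qed
    then show ?thesis by blast
  qed
qed

lemma quad_form:
  fixes b :: "nat \<Rightarrow> 'h::chilbert \<Rightarrow> 'h"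
  shows "(\<Sum>i<l. \<Sum>j<l. cnj (v i) * (\<Sum>k<m. Qmat b (xi k) i j) * v j)
     = (\<Sum>k<m. cinner (\<Sum>j<l. v j *\<^sub>C b j (xi k)) (\<Sum>j<l. v j *\<^sub>C b j (xi k)))"
proof -
  have "(\<Sum>k<m. cinner (\<Sum>j<l. v j *\<^sub>C b j (xi k)) (\<Sum>j<l. v j *\<^sub>C b j (xi k)))
      = (\<Sum>k<m. \<Sum>i<l. \<Sum>j<l. cnj (v i) * (v j * cinner (b j (xi k)) (b i (xi k))))"
    by (simp add: cinner_sum_left cinner_sum_right cinner_scaleC_left cinner_scaleC_right sum_distrib_left)
  also have "\<dots> = (\<Sum>i<l. \<Sum>k<m. \<Sum>j<l. cnj (v i) * (v j * cinner (b j (xi k)) (b i (xi k))))"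
    by (rule sum.swap)
  also have "\<dots> = (\<Sum>i<l. \<Sum>j<l. \<Sum>k<m. cnj (v i) * (v j * cinner (b j (xi k)) (b i (xi k))))"
    by (rule sum.cong[OF refl], rule sum.swap)
  also have "\<dots> = (\<Sum>i<l. \<Sum>j<l. cnj (v i) * (\<Sum>k<m. Qmat b (xi k) i j) * v j)"
    by (simp add: Qmat_def sum_distrib_left sum_distrib_right mult_ac)
  finally show ?thesis by simp
qed

lemma cinner_self_real: "Im (cinner (y::'a::chilbert) y) = 0"
  using cinner_commute[of y y] by (metis cnj.simps(2) neg_equal_zero)

theorem lemma1p11:
  fixes b :: "nat \<Rightarrow> 'h::chilbert \<Rightarrow> 'h" and l :: nat
  assumes "l \<ge> 1"
    and "\<forall>j<l. bounded_clinear (b j)"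
  shows "ops_lin_indep l b \<longleftrightarrow>
    (\<exists>(m::nat) (xi :: nat \<Rightarrow> 'h). pos_def_mat l (\<lambda>i j. \<Sum>k<m. Qmat b (xi k) i j))"
proof
  assume "ops_lin_indep l b"
  then obtain m :: nat and xi :: "nat \<Rightarrow> 'h" where K: "kern_triv l b m xi" using exists_kern by blast
  have "pos_def_mat l (\<lambda>i j. \<Sum>k<m. Qmat b (xi k) i j)"
    unfolding pos_def_mat_def Let_def quad_form
  proof (intro allI impI)
    fix v :: "nat \<Rightarrow> complex" assume "\<exists>i<l. v i \<noteq> 0"
    then obtain k where k: "k < m" and yk: "(\<Sum>j<l. v j *\<^sub>C b j (xi k)) \<noteq> 0"
      using K unfolding kern_triv_def by blast
    let ?y = "\<lambda>k. (\<Sum>j<l. v j *\<^sub>C b j (xi k))"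
    show "Im (\<Sum>k<m. cinner (?y k) (?y k)) = 0 \<and> 0 < Re (\<Sum>k<m. cinner (?y k) (?y k))"
    proof
      show "Im (\<Sum>k<m. cinner (?y k) (?y k)) = 0" by (simp add: cinner_self_real)
      have pos: "0 < Re (cinner (?y k) (?y k))"
      proof -
        have "cinner (?y k) (?y k) \<noteq> 0" using yk cinner_eq_zero_iff by blast
        then have "Re (cinner (?y k) (?y k)) \<noteq> 0" using cinner_self_real complex_eq_iff by force
        then show ?thesis using cinner_nonneg order_le_neq_trans by metis
      qed
      have "Re (cinner (?y k) (?y k)) \<le> (\<Sum>k\<in>{..<m}. Re (cinner (?y k) (?y k)))"
        by (rule member_le_sum) (use k cinner_nonneg in auto)
      then show "0 < Re (\<Sum>k<m. cinner (?y k) (?y k))" using pos by simp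
    qed
  qed
  then show "\<exists>(m::nat) (xi :: nat \<Rightarrow> 'h). pos_def_mat l (\<lambda>i j. \<Sum>k<m. Qmat b (xi k) i j)" by blast
next
  assume "\<exists>(m::nat) (xi :: nat \<Rightarrow> 'h). pos_def_mat l (\<lambda>i j. \<Sum>k<m. Qmat b (xi k) i j)"
  then obtain m :: nat and xi :: "nat \<Rightarrow> 'h" where P: "pos_def_mat l (\<lambda>i j. \<Sum>k<m. Qmat b (xi k) i j)" by blast
  show "ops_lin_indep l b"
    unfolding ops_lin_indep_def
  proof (intro allI impI)
    fix c :: "nat \<Rightarrow> complex" and j0
    assume c: "\<forall>x. (\<Sum>j<l. c j *\<^sub>C b j x) = 0" and j0: "j0 < l"
    show "c j0 = 0"
    proof (rule ccontr)
    assume "c j0 \<noteq> 0"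
    then have "\<exists>i<l. c i \<noteq> 0" using j0 by blast
    then have "0 < Re (\<Sum>i<l. \<Sum>j<l. cnj (c i) * (\<Sum>k<m. Qmat b (xi k) i j) * c j)"
      using P unfolding pos_def_mat_def Let_def by blast
    then show False unfolding quad_form using c by simp
  qed
  qed
qed

end
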